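(* Fix $k\ge 1$ and a length $T$, and call a binary signal of length $T$ admissible if it contains no more than $k$ consecutive $0$ bits. An admissible signal is minimal if and only if every $1$ bit of the signal is surrounded by at least $k$ $0$ bits, i.e. if a $1$ bit is immediately preceded by exactly $p$ consecutive $0$ bits and immediately succeeded by exactly $q$ consecutive $0$ bits, then $p+q\ge k$.
   Context: Partial order: $\sigma_1\preceq\sigma_2$ if for every $i$ with $\sigma_1(i)=1$ we also have $\sigma_2(i)=1$. An admissible signal $\sigma$ is minimal if there is no other admissible signal $\bar\sigma\neq\sigma$ of the same length with $\bar\sigma\preceq\sigma$. *)

theory Defs
  imports Main
begin

text \<open>A binary signal of length T is a bool list of length T (True = bit 1, False = bit 0).\<close>

definition admissible :: "nat \<Rightarrow> bool list \<Rightarrow> bool" where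
  "admissible k xs \<longleftrightarrow>
     \<not> (\<exists>i. i + k < length xs \<and> (\<forall>j. i \<le> j \<and> j \<le> i + k \<longrightarrow> \<not> xs ! j))"

definition sig_le :: "bool list \<Rightarrow> bool list \<Rightarrow> bool" where
  "sig_le s1 s2 \<longleftrightarrow> (\<forall>i < length s1. s1 ! i \<longrightarrow> s2 ! i)"

definition minimal_admissible :: "nat \<Rightarrow> bool list \<Rightarrow> bool" where
  "minimal_admissible k s \<longleftrightarrow> admissible k s \<and>
     \<not> (\<exists>s'. length s' = length s \<and> admissible k s' \<and> s' \<noteq> s \<and> sig_le s' s)"

definition zeros_before :: "bool list \<Rightarrow> nat \<Rightarrow> nat" where
  "zeros_before xs i = length (takeWhile Not (rev (take i xs)))"

definition zeros_after :: "bool list \<Rightarrow> nat \<Rightarrow> nat" where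
  "zeros_after xs i = length (takeWhile Not (drop (Suc i) xs))"

end

theory Submission
  imports Defs
begin

lemma za_bound: "i < length xs \<Longrightarrow> Suc i + zeros_after xs i \<le> length xs"
proof -
  have "length (takeWhile Not (drop (Suc i) xs)) \<le> length (drop (Suc i) xs)"
    by (rule length_takeWhile_le)
  moreover assume "i < length xs"
  ultimately show ?thesis unfolding zeros_after_def by simp
qed

lemma za_zero: "Suc i \<le> j \<Longrightarrow> j < Suc i + zeros_after xs i \<Longrightarrow> \<not> xs ! j"
proof -
  assume a: "Suc i \<le> j" "j < Suc i + zeros_after xs i"
  let ?t = "takeWhile Not (drop (Suc i) xs)"
  have l: "j - Suc i < length ?t" using a unfolding zeros_after_def by simp
  hence "?t ! (j - Suc i) = drop (Suc i) xs ! (j - Suc i)" by (rule takeWhile_nth)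
  moreover have "?t ! (j - Suc i) \<in> set ?t" using l by simp
  hence "\<not> ?t ! (j - Suc i)" using set_takeWhileD by fastforce
  moreover have "j - Suc i < length (drop (Suc i) xs)"
    using l length_takeWhile_le[of Not "drop (Suc i) xs"] by linarith
  ultimately show ?thesis using a by simp
qed

lemma za_stop: "Suc i + zeros_after xs i < length xs \<Longrightarrow> xs ! (Suc i + zeros_after xs i)"
proof -
  assume a: "Suc i + zeros_after xs i < length xs"
  let ?d = "drop (Suc i) xs"
  have "length (takeWhile Not ?d) < length ?d" using a unfolding zeros_after_def by simp
  hence "\<not> Not (?d ! length (takeWhile Not ?d))" by (rule nth_length_takeWhile)
  thus ?thesis using a unfolding zeros_after_def by simp
qed

lemma zb_bound: "zeros_before xs i \<le> i"
  unfolding zeros_before_def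
  by (metis length_rev length_take length_takeWhile_le min.bounded_iff order_refl)

lemma zb_zero: "i \<le> length xs \<Longrightarrow> j < i \<Longrightarrow> i - zeros_before xs i \<le> j \<Longrightarrow> \<not> xs ! j"
proof -
  assume a: "i \<le> length xs" "j < i" "i - zeros_before xs i \<le> j"
  let ?r = "rev (take i xs)"
  let ?t = "takeWhile Not ?r"
  have zb: "zeros_before xs i \<le> i" by (rule zb_bound)
  have l: "i - Suc j < length ?t" using a zb unfolding zeros_before_def by linarith
  hence "?t ! (i - Suc j) = ?r ! (i - Suc j)" by (rule takeWhile_nth)
  moreover have "?t ! (i - Suc j) \<in> set ?t" using l by simp
  hence "\<not> ?t ! (i - Suc j)" using set_takeWhileD by fastforce
  moreover have "?r ! (i - Suc j) = take i xs ! (length (take i xs) - Suc (i - Suc j))"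
    using a by (simp add: rev_nth)
  moreover have "length (take i xs) - Suc (i - Suc j) = j" using a by simp
  ultimately have "\<not> take i xs ! j" by simp
  thus ?thesis using a by simp
qed

lemma zb_stop: "i \<le> length xs \<Longrightarrow> zeros_before xs i < i \<Longrightarrow> xs ! (i - zeros_before xs i - 1)"
proof -
  assume a: "i \<le> length xs" "zeros_before xs i < i"
  let ?r = "rev (take i xs)"
  have lr: "length ?r = i" using a by simp
  have "length (takeWhile Not ?r) < length ?r" using a lr unfolding zeros_before_def by simp
  hence "\<not> Not (?r ! length (takeWhile Not ?r))" by (rule nth_length_takeWhile)
  hence "?r ! zeros_before xs i" unfolding zeros_before_def by simp
  moreover have "?r ! zeros_before xs i = take i xs ! (i - Suc (zeros_before xs i))"
    using a lr by (simp add: rev_nth)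
  ultimately show ?thesis using a by simp
qed

lemma adm_mono: "admissible k s' \<Longrightarrow> length s' = length s \<Longrightarrow> sig_le s' s \<Longrightarrow> admissible k s"
  unfolding admissible_def sig_le_def by (metis le_less_trans)

theorem mainTheorem7:
  fixes k T :: nat and \<sigma> :: "bool list"
  assumes "k \<ge> 1" and "length \<sigma> = T" and "admissible k \<sigma>"
  shows "minimal_admissible k \<sigma> \<longleftrightarrow>
    (\<forall>i < T. \<sigma> ! i \<longrightarrow> zeros_before \<sigma> i + zeros_after \<sigma> i \<ge> k)"
proof
  assume m: "minimal_admissible k \<sigma>"
  show "\<forall>i < T. \<sigma> ! i \<longrightarrow> zeros_before \<sigma> i + zeros_after \<sigma> i \<ge> k"
  proof (intro allI impI, rule ccontr)
    fix i assume i: "i < T" "\<sigma> ! i" "\<not> zeros_before \<sigma> i + zeros_after \<sigma> i \<ge> k"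
    define s where "s = \<sigma>[i := False]"
    define p where "p = zeros_before \<sigma> i"
    define q where "q = zeros_after \<sigma> i"
    have ls: "length s = length \<sigma>" unfolding s_def by simp
    have "s ! i = False" using i assms(2) unfolding s_def by simp
    hence ne: "s \<noteq> \<sigma>" using i(2) by auto
    have le: "sig_le s \<sigma>" unfolding sig_le_def
    proof (intro allI impI)
      fix j assume "j < length s" "s ! j"
      thus "\<sigma> ! j" unfolding s_def by (cases "j = i") auto
    qed
    have "admissible k s"
      unfolding admissible_def
    proof
      assume "\<exists>a. a + k < length s \<and> (\<forall>j. a \<le> j \<and> j \<le> a + k \<longrightarrow> \<not> s ! j)"
      then obtain a where a: "a + k < length s" "\<forall>j. a \<le> j \<and> j \<le> a + k \<longrightarrow> \<not> s ! j" by blast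
      have sj: "\<And>j. j \<noteq> i \<Longrightarrow> s ! j = \<sigma> ! j" unfolding s_def by simp
      show False
      proof (cases "a \<le> i \<and> i \<le> a + k")
        case False
        have "\<forall>j. a \<le> j \<and> j \<le> a + k \<longrightarrow> \<not> \<sigma> ! j"
        proof (intro allI impI)
          fix j assume "a \<le> j \<and> j \<le> a + k"
          moreover from this False have "j \<noteq> i" by auto
          ultimately show "\<not> \<sigma> ! j" using a(2) sj[of j] by simp
        qed
        moreover have "a + k < length \<sigma>" using a(1) ls by simp
        ultimately show False using assms(3) unfolding admissible_def by blast
      next
        case True
        have iT: "i \<le> length \<sigma>" using i assms(2) by simp
        have "i - p \<le> a"
        proof (rule ccontr)
          assume "\<not> i - p \<le> a"
          hence pi: "p < i" "a \<le> i - p - 1" "i - p - 1 < i" by auto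
          have "\<sigma> ! (i - p - 1)" using zb_stop[OF iT] pi unfolding p_def by simp
          moreover have "a \<le> i - p - 1 \<and> i - p - 1 \<le> a + k" using pi True by linarith
          hence "\<not> s ! (i - p - 1)" using a(2) by blast
          moreover have "i - p - 1 \<noteq> i" using pi by linarith
          ultimately show False using sj[of "i - p - 1"] by simp
        qed
        moreover have "a + k \<le> i + q"
        proof (rule ccontr)
          assume c: "\<not> a + k \<le> i + q"
          have b: "Suc i + q < length \<sigma>" using c a(1) ls by simp
          have "\<sigma> ! (Suc i + q)" using za_stop b unfolding q_def by simp
          moreover have "a \<le> Suc i + q \<and> Suc i + q \<le> a + k" using c True by linarith
          hence "\<not> s ! (Suc i + q)" using a(2) by blast
          moreover have "Suc i + q \<noteq> i" by linarith
          ultimately show False using sj[of "Suc i + q"] by simp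
        qed
        moreover have "p \<le> i" unfolding p_def by (rule zb_bound)
        ultimately show False using i(3) True unfolding p_def[symmetric] q_def[symmetric] by linarith
      qed
    qed
    thus False using m ls ne le unfolding minimal_admissible_def by blast
  qed
next
  assume h: "\<forall>i < T. \<sigma> ! i \<longrightarrow> zeros_before \<sigma> i + zeros_after \<sigma> i \<ge> k"
  show "minimal_admissible k \<sigma>"
    unfolding minimal_admissible_def
  proof (intro conjI notI)
    show "admissible k \<sigma>" by (rule assms(3))
  next
    assume "\<exists>s'. length s' = length \<sigma> \<and> admissible k s' \<and> s' \<noteq> \<sigma> \<and> sig_le s' \<sigma>"
    then obtain s' where s': "length s' = length \<sigma>" "admissible k s'" "s' \<noteq> \<sigma>" "sig_le s' \<sigma>" by blast
    obtain i where i0: "i < length \<sigma>" "s' ! i \<noteq> \<sigma> ! i"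
      using s'(1,3) nth_equalityI[of s' \<sigma>] by auto
    have i: "\<sigma> ! i" "\<not> s' ! i" using i0 s'(1,4) unfolding sig_le_def by auto
    define s where "s = \<sigma>[i := False]"
    have ls: "length s = length \<sigma>" unfolding s_def by simp
    have sj: "\<And>j. j \<noteq> i \<Longrightarrow> s ! j = \<sigma> ! j" unfolding s_def by simp
    have si: "\<not> s ! i" unfolding s_def using i0 by simp
    have "sig_le s' s" unfolding sig_le_def
    proof (intro allI impI)
      fix j assume "j < length s'" "s' ! j"
      thus "s ! j" using s'(1,4) sj i unfolding sig_le_def by (cases "j = i") auto
    qed
    hence adm: "admissible k s" using adm_mono[OF s'(2)] s'(1) ls by simp
    define p where "p = zeros_before \<sigma> i"
    define q where "q = zeros_after \<sigma> i"
    have pq: "p + q \<ge> k" using h i0 i assms(2) unfolding p_def q_def by auto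
    have pi: "p \<le> i" unfolding p_def by (rule zb_bound)
    have qb: "Suc i + q \<le> length \<sigma>" unfolding q_def using za_bound i0(1) by blast
    have "\<forall>j. i - p \<le> j \<and> j \<le> i - p + k \<longrightarrow> \<not> s ! j"
    proof (intro allI impI)
      fix j assume j: "i - p \<le> j \<and> j \<le> i - p + k"
      consider "j < i" | "j = i" | "j > i" by linarith
      thus "\<not> s ! j"
      proof cases
        case 1
        have "\<not> \<sigma> ! j" using zb_zero[of i \<sigma> j] i0 j 1 unfolding p_def by simp
        thus ?thesis using sj[of j] 1 by simp
      next
        case 2 thus ?thesis using si by simp
      next
        case 3
        have "j < Suc i + q" using j pq pi by linarith
        hence "\<not> \<sigma> ! j" using za_zero[of i j \<sigma>] 3 unfolding q_def by simp
        thus ?thesis using sj[of j] 3 by simp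
      qed
    qed
    moreover have "i - p + k < length s" using pq pi qb ls by linarith
    ultimately show False using adm unfolding admissible_def by blast
  qed
qed

end
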